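(* For all integers $n\ge0$, $$r_{2n}(s,q)=\sum_{k=0}^n(-q;q)_k\,q^{\binom{k}{2}}s^k\begin{bmatrix} n\\ k\end{bmatrix}_{q^2}r_{n-k}(s^2,q^2),$$ $$r_{2n+1}(s,q)=(1+s)\sum_{k=0}^n(-q;q)_k\,q^{\binom{k+1}{2}}s^k\begin{bmatrix} n\\ k\end{bmatrix}_{q^2}r_{n-k}(s^2,q^2).$$
   Context: $q$ is an indeterminate. $(x;q)_n=\prod_{j=0}^{n-1}(1-q^jx)$. The Gaussian binomial coefficient is $\begin{bmatrix} n\\ j\end{bmatrix}_q=\frac{(q;q)_n}{(q;q)_j(q;q)_{n-j}}$ for $0\le j\le n$ and $0$ otherwise. The Rogers–Szegö polynomials are $r_n(s,q)=\sum_{j=0}^n\begin{bmatrix} n\\ j\end{bmatrix}_q s^j$. *)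

theory Defs
  imports "HOL-Computational_Algebra.Polynomial" "HOL-Computational_Algebra.Fraction_Field"
begin

definition qpoch :: "'a::comm_ring_1 \<Rightarrow> 'a \<Rightarrow> nat \<Rightarrow> 'a" where
  "qpoch x q n = (\<Prod>j<n. 1 - q ^ j * x)"

definition qbinom :: "'a::field \<Rightarrow> nat \<Rightarrow> nat \<Rightarrow> 'a" where
  "qbinom q n j = (if j \<le> n then qpoch q q n / (qpoch q q j * qpoch q q (n - j)) else 0)"

definition rsz :: "nat \<Rightarrow> 'a::field \<Rightarrow> 'a \<Rightarrow> 'a" where
  "rsz n s q = (\<Sum>j=0..n. qbinom q n j * s ^ j)"

definition qind :: "'a::idom poly fract" where
  "qind = Fract [:0, 1:] 1"

end

theory Submission
  imports Defs
begin

lemma qpoch_Suc: "qpoch x q (Suc n) = qpoch x q n * (1 - q ^ n * x)"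
  by (simp add: qpoch_def)

lemma qpoch_nz:
  fixes q :: "'a::field"
  assumes nz: "\<And>j. 0 < j \<Longrightarrow> q ^ j \<noteq> 1"
  shows "qpoch q q m \<noteq> 0"
proof -
  have "\<And>j. 1 - q ^ j * q \<noteq> 0"
    using nz[of "Suc _"] by (simp add: mult.commute)
  then show ?thesis by (simp add: qpoch_def)
qed

lemma qind_pow: "(qind::'a::idom poly fract) ^ j = Fract ([:0,1:] ^ j) 1"
  by (induction j) (simp_all add: qind_def One_fract_def)

lemma qind_nz: "0 < j \<Longrightarrow> (qind::'a::idom poly fract) ^ j \<noteq> 1"
proof
  assume j: "0 < j" and h: "(qind::'a::idom poly fract) ^ j = 1"
  hence "Fract ([:0,1::'a:] ^ j) 1 = Fract 1 1" by (simp add: qind_pow One_fract_def)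
  hence "[:0,1::'a:] ^ j = 1" by (simp add: eq_fract)
  hence "degree ([:0,1::'a:] ^ j) = 0" by simp
  moreover have "degree ([:0,1::'a:] ^ j) = j" by (simp add: degree_power_eq)
  ultimately show False using j by simp
qed


lemma G_big: "n < k \<Longrightarrow> qbinom q n k = 0" by (simp add: qbinom_def)
lemma qpoch_Suc': "qpoch q q (Suc n) = qpoch q q n * (1 - q ^ Suc n)"
  by (simp add: qpoch_def mult.commute)

lemma G_0:
  fixes q :: "'a::field"
  assumes nz: "\<And>j. 0 < j \<Longrightarrow> q ^ j \<noteq> 1"
  shows "qbinom q n 0 = 1" using qpoch_nz[OF nz, of n] by (simp add: qbinom_def qpoch_def)

lemma ratio_aux:
  fixes A B C x y :: "'a::field"
  assumes "A \<noteq> 0" "B \<noteq> 0" "x \<noteq> 0" "y \<noteq> 0"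
  shows "x * (C / (A * x * B)) = y * (C / (A * (B * y)))"
  using assms by simp

lemma absorb_aux:
  fixes A B C x y :: "'a::field"
  assumes "A \<noteq> 0" "B \<noteq> 0" "x \<noteq> 0"
  shows "x * (C * y / (A * x * B)) = y * (C / (A * B))"
  using assms by simp

lemma G_ratio:
  fixes q :: "'a::field"
  assumes nz: "\<And>j. 0 < j \<Longrightarrow> q ^ j \<noteq> 1"
  shows "(1 - q ^ Suc k) * qbinom q n (Suc k) = (1 - q ^ (n - k)) * qbinom q n k"
proof (cases "k < n")
  case True
  define m where "m = n - Suc k"
  have n: "n = k + Suc m" using True by (simp add: m_def)
  have a: "1 - q ^ Suc k \<noteq> 0" "1 - q ^ Suc m \<noteq> 0" using nz[of "Suc k"] nz[of "Suc m"] by auto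
  have b: "qpoch q q k \<noteq> 0" "qpoch q q m \<noteq> 0" "qpoch q q n \<noteq> 0" using qpoch_nz[OF nz] by auto
  have c: "n - k = Suc m" "n - Suc k = m" using n by auto
  have e1: "qbinom q n (Suc k) = qpoch q q n / (qpoch q q (Suc k) * qpoch q q m)"
    using True c by (simp add: qbinom_def)
  have e2: "qbinom q n k = qpoch q q n / (qpoch q q k * qpoch q q (Suc m))"
    using True c by (simp add: qbinom_def)
  show ?thesis unfolding e1 e2 c(1) qpoch_Suc' by (rule ratio_aux[OF b(1) b(2) a(1) a(2)])
next
  case False
  then show ?thesis by (cases "k = n") (simp_all add: qbinom_def)
qed

lemma G_absorb:
  fixes q :: "'a::field"
  assumes nz: "\<And>j. 0 < j \<Longrightarrow> q ^ j \<noteq> 1"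
  shows "(1 - q ^ Suc k) * qbinom q (Suc n) (Suc k) = (1 - q ^ Suc n) * qbinom q n k"
proof (cases "k \<le> n")
  case True
  have a: "1 - q ^ Suc k \<noteq> 0" using nz[of "Suc k"] by auto
  have b: "qpoch q q k \<noteq> 0" "qpoch q q (n-k) \<noteq> 0" "qpoch q q n \<noteq> 0" using qpoch_nz[OF nz] by auto
  have e1: "qbinom q (Suc n) (Suc k) = qpoch q q (Suc n) / (qpoch q q (Suc k) * qpoch q q (n - k))"
    using True by (simp add: qbinom_def)
  have e2: "qbinom q n k = qpoch q q n / (qpoch q q k * qpoch q q (n - k))"
    using True by (simp add: qbinom_def)
  show ?thesis unfolding e1 e2 qpoch_Suc' by (rule absorb_aux[OF b(1) b(2) a])
next
  case False
  then show ?thesis by (simp add: qbinom_def)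
qed

lemma pascal_aux:
  fixes A B C a b :: "'a::field"
  assumes "A \<noteq> 0" "B \<noteq> 0" "1 - a \<noteq> 0" "1 - b \<noteq> 0"
  shows "C * (1 - a * b) / (A * (1 - a) * (B * (1 - b))) = C / (A * (B * (1 - b))) + a * (C / (A * (1 - a) * B))"
proof -
  have 1: "C / (A * (B * (1 - b))) = C * (1 - a) / (A * (1 - a) * (B * (1 - b)))" using assms by simp
  have 2: "a * (C / (A * (1 - a) * B)) = a * C * (1 - b) / (A * (1 - a) * (B * (1 - b)))" using assms by simp
  have 3: "C * (1 - a * b) = C * (1 - a) + a * C * (1 - b)" by (simp add: algebra_simps)
  show ?thesis unfolding 1 2 3 by (simp add: add_divide_distrib)
qed

lemma G_pascal:
  fixes q :: "'a::field"
  assumes nz: "\<And>j. 0 < j \<Longrightarrow> q ^ j \<noteq> 1"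
  shows "qbinom q (Suc n) (Suc k) = qbinom q n k + q ^ Suc k * qbinom q n (Suc k)"
proof (cases "k < n")
  case True
  define m where "m = n - Suc k"
  have n: "n = k + Suc m" using True by (simp add: m_def)
  have a: "1 - q ^ Suc k \<noteq> 0" "1 - q ^ Suc m \<noteq> 0" using nz[of "Suc k"] nz[of "Suc m"] by auto
  have b: "qpoch q q k \<noteq> 0" "qpoch q q m \<noteq> 0" "qpoch q q n \<noteq> 0" using qpoch_nz[OF nz] by auto
  have c: "n - k = Suc m" "n - Suc k = m" "Suc n - Suc k = Suc m" using n by auto
  have d: "q ^ Suc n = q ^ Suc k * q ^ Suc m" using n by (simp add: power_add[symmetric])
  have e1: "qbinom q (Suc n) (Suc k) = qpoch q q (Suc n) / (qpoch q q (Suc k) * qpoch q q (Suc m))"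
    using True c by (simp add: qbinom_def)
  have e2: "qbinom q n k = qpoch q q n / (qpoch q q k * qpoch q q (Suc m))"
    using True c by (simp add: qbinom_def)
  have e3: "qbinom q n (Suc k) = qpoch q q n / (qpoch q q (Suc k) * qpoch q q m)"
    using True c by (simp add: qbinom_def)
  show ?thesis unfolding e1 e2 e3 qpoch_Suc' d
    by (rule pascal_aux[OF b(1) b(2) a(1) a(2)])
next
  case False
  then show ?thesis using qpoch_nz[OF nz, of n] qpoch_nz[OF nz, of "Suc n"]
    by (cases "k = n") (simp_all add: qbinom_def qpoch_def)
qed


lemma rsz_ext:
  assumes "m \<le> N"
  shows "rsz m s q = (\<Sum>j\<le>N. qbinom q m j * s ^ j)"
  unfolding rsz_def atLeast0AtMost
  by (rule sum.mono_neutral_left) (use assms in \<open>auto simp: G_big\<close>)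

lemma rsz_0: "rsz 0 s (q::'a::field) = 1"
  by (simp add: rsz_def qbinom_def qpoch_def)

lemma R1:
  fixes q :: "'a::field"
  assumes nz: "\<And>j. 0 < j \<Longrightarrow> q ^ j \<noteq> 1"
  shows "rsz (Suc m) s q = s * rsz m s q + rsz m (q * s) q"
proof -
  have "rsz (Suc m) s q = (\<Sum>j\<le>Suc m. qbinom q (Suc m) j * s ^ j)"
    by (simp add: rsz_def atLeast0AtMost)
  also have "\<dots> = 1 + (\<Sum>j\<le>m. qbinom q (Suc m) (Suc j) * s ^ Suc j)"
    by (subst sum.atMost_Suc_shift) (simp add: G_0[OF nz])
  also have "\<dots> = 1 + (\<Sum>j\<le>m. s * (qbinom q m j * s ^ j) + qbinom q m (Suc j) * (q * s) ^ Suc j)"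
    by (intro arg_cong[where f="\<lambda>x. 1 + x"] sum.cong refl)
       (simp add: G_pascal[OF nz] algebra_simps power_mult_distrib)
  also have "\<dots> = s * rsz m s q + (1 + (\<Sum>j\<le>m. qbinom q m (Suc j) * (q * s) ^ Suc j))"
    by (simp add: sum.distrib sum_distrib_left rsz_def atLeast0AtMost)
  also have "1 + (\<Sum>j\<le>m. qbinom q m (Suc j) * (q * s) ^ Suc j) = rsz m (q * s) q"
    by (subst rsz_ext[of m "Suc m"], simp, subst sum.atMost_Suc_shift) (simp add: G_0[OF nz])
  finally show ?thesis .
qed

lemma RQ:
  fixes Q :: "'a::field"
  assumes nz: "\<And>j. 0 < j \<Longrightarrow> Q ^ j \<noteq> 1"
  shows "rsz m (Q * t) Q = rsz m t Q - (1 - Q ^ m) * t * rsz (m - 1) t Q"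
proof (cases m)
  case 0
  then show ?thesis by (simp add: rsz_0)
next
  case (Suc m')
  have e: "\<And>x. rsz (Suc m') x Q = 1 + (\<Sum>j\<le>m'. qbinom Q (Suc m') (Suc j) * x ^ Suc j)"
    by (simp add: rsz_def atLeast0AtMost sum.atMost_Suc_shift G_0[OF nz] del: sum.atMost_Suc)
  have f: "(1 - Q ^ Suc m') * t * rsz m' t Q = (\<Sum>j\<le>m'. (1 - Q ^ Suc j) * qbinom Q (Suc m') (Suc j) * t ^ Suc j)"
  proof -
    have "(1 - Q ^ Suc m') * t * rsz m' t Q = (\<Sum>j\<le>m'. (1 - Q ^ Suc m') * qbinom Q m' j * t ^ Suc j)"
      by (simp add: rsz_def atLeast0AtMost sum_distrib_left mult_ac)
    also have "\<dots> = (\<Sum>j\<le>m'. (1 - Q ^ Suc j) * qbinom Q (Suc m') (Suc j) * t ^ Suc j)"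
      by (rule sum.cong) (simp_all only: G_absorb[OF nz])
    finally show ?thesis .
  qed
  have g: "(\<Sum>j\<le>m'. qbinom Q (Suc m') (Suc j) * (Q * t) ^ Suc j) = 
     (\<Sum>j\<le>m'. qbinom Q (Suc m') (Suc j) * t ^ Suc j) - (\<Sum>j\<le>m'. (1 - Q ^ Suc j) * qbinom Q (Suc m') (Suc j) * t ^ Suc j)"
    by (simp add: sum_subtractf[symmetric] power_mult_distrib algebra_simps)
  show ?thesis unfolding Suc using e f g by simp
qed

lemma R3:
  fixes Q :: "'a::field"
  assumes nz: "\<And>j. 0 < j \<Longrightarrow> Q ^ j \<noteq> 1"
  shows "rsz (Suc m) t Q = (1 + t) * rsz m t Q - (1 - Q ^ m) * t * rsz (m - 1) t Q"
  using R1[OF nz, of m t] RQ[OF nz, of m t] by (simp add: algebra_simps)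


definition aa :: "'a::field \<Rightarrow> nat \<Rightarrow> nat \<Rightarrow> 'a" where
  "aa q n k = qpoch (- q) q k * q ^ (k choose 2) * qbinom (q ^ 2) n k"
definition EV :: "'a::field \<Rightarrow> nat \<Rightarrow> 'a \<Rightarrow> 'a" where
  "EV q n s = (\<Sum>k\<le>n. aa q n k * s ^ k * rsz (n - k) (s ^ 2) (q ^ 2))"
definition OD :: "'a::field \<Rightarrow> nat \<Rightarrow> 'a \<Rightarrow> 'a" where
  "OD q n s = (\<Sum>k\<le>n. q ^ k * aa q n k * s ^ k * rsz (n - k) (s ^ 2) (q ^ 2))"

lemma choose2_Suc: "Suc k choose 2 = (k choose 2) + k"
  using binomial_Suc_Suc[of k 1] by (simp add: numeral_2_eq_2)

lemma sqd: "((q::'a::comm_ring_1) ^ 2) ^ j = q ^ j * q ^ j"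
  by (simp add: power_mult_distrib[symmetric] power2_eq_square)

context
  fixes q :: "'a::field"
  assumes nz: "\<And>j. 0 < j \<Longrightarrow> q ^ j \<noteq> 1"
begin

lemma nz2: "0 < j \<Longrightarrow> (q ^ 2) ^ j \<noteq> 1"
  using nz[of "2 * j"] by (simp add: power_mult)

lemma a0: "aa q n 0 = 1"
  by (simp add: aa_def qpoch_def G_0[OF nz2] binomial_eq_0)

lemma abig: "n < k \<Longrightarrow> aa q n k = 0"
  by (simp add: aa_def G_big)

lemma C1: "(1 - q ^ Suc k) * aa q n (Suc k) = q ^ k * aa q n k * (1 - (q ^ 2) ^ (n - k))"
proof -
  have "(1 - q ^ Suc k) * aa q n (Suc k) = qpoch (- q) q k * q ^ (k choose 2) * q ^ k * ((1 - (q ^ 2) ^ Suc k) * qbinom (q ^ 2) n (Suc k))"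
    unfolding aa_def qpoch_Suc choose2_Suc power_add sqd[of q "Suc k"] by (simp add: algebra_simps)
  also have "\<dots> = qpoch (- q) q k * q ^ (k choose 2) * q ^ k * ((1 - (q ^ 2) ^ (n - k)) * qbinom (q ^ 2) n k)"
    by (simp only: G_ratio[OF nz2])
  finally show ?thesis by (simp add: aa_def algebra_simps)
qed

lemma C2: "aa q (Suc n) (Suc k) = (q ^ 2) ^ Suc k * aa q n (Suc k) + (1 + q ^ Suc k) * q ^ k * aa q n k"
proof -
  have p: "qbinom (q ^ 2) (Suc n) (Suc k) = qbinom (q ^ 2) n k + (q ^ 2) ^ Suc k * qbinom (q ^ 2) n (Suc k)"
    by (rule G_pascal[OF nz2])
  show ?thesis unfolding aa_def qpoch_Suc choose2_Suc power_add p by (simp add: algebra_simps)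
qed


lemma lemA: "s * EV q n s + EV q n (q * s) = (1 + s) * OD q n s"
proof -
  define R where "R m = rsz m (s ^ 2) (q ^ 2)" for m
  define g where "g k = (1 - q ^ k) * aa q n k * s ^ Suc k * R (n - k)" for k
  have "s * EV q n s + EV q n (q * s) =
      (\<Sum>k\<le>n. s * (aa q n k * s ^ k * R (n - k)) + aa q n k * (q * s) ^ k * rsz (n - k) ((q * s) ^ 2) (q ^ 2))"
    by (simp add: EV_def R_def sum_distrib_left sum.distrib)
  also have "\<dots> = (\<Sum>k\<le>n. (1 + s) * (q ^ k * aa q n k * s ^ k * R (n - k)) + (g k - g (Suc k)))"
  proof (rule sum.cong[OF refl])
    fix k assume k: "k \<in> {..n}"
    have r: "rsz (n - k) ((q * s) ^ 2) (q ^ 2) = R (n - k) - (1 - (q ^ 2) ^ (n - k)) * s ^ 2 * R (n - k - 1)"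
      unfolding R_def power_mult_distrib by (rule RQ[OF nz2])
    have c: "g (Suc k) = q ^ k * aa q n k * (1 - (q ^ 2) ^ (n - k)) * s ^ Suc (Suc k) * R (n - k - 1)"
    proof -
      have "g (Suc k) = ((1 - q ^ Suc k) * aa q n (Suc k)) * s ^ Suc (Suc k) * R (n - k - 1)"
        by (simp add: g_def)
      then show ?thesis by (simp only: C1)
    qed
    show "s * (aa q n k * s ^ k * R (n - k)) + aa q n k * (q * s) ^ k * rsz (n - k) ((q * s) ^ 2) (q ^ 2) =
        (1 + s) * (q ^ k * aa q n k * s ^ k * R (n - k)) + (g k - g (Suc k))"
      unfolding r c unfolding g_def by (simp add: algebra_simps power_mult_distrib power2_eq_square)
  qed
  also have "\<dots> = (1 + s) * OD q n s"
  proof -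
    have "(\<Sum>k\<le>n. g k - g (Suc k)) = 0" by (simp only: sum_telescope) (simp add: g_def abig)
    then show ?thesis by (simp add: sum.distrib OD_def R_def sum_distrib_left)
  qed
  finally show ?thesis .
qed


lemma lemB: "s * (1 + s) * OD q n s + (1 + q * s) * OD q n (q * s) = EV q (Suc n) s"
proof -
  define R where "R m = rsz m (s ^ 2) (q ^ 2)" for m
  define X where "X k = q ^ k * q ^ k * aa q n k * s ^ k * R (Suc n - k)" for k
  define Y where "Y k = (1 + q ^ Suc k) * q ^ k * aa q n k * s ^ Suc k * R (n - k)" for k
  define u where "u k = (q ^ k * aa q n k - q ^ k * q ^ k * aa q n k) * s ^ Suc (Suc k) * R (n - k)" for k
  have "s * (1 + s) * OD q n s + (1 + q * s) * OD q n (q * s) =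
      (\<Sum>k\<le>n. s * (1 + s) * (q ^ k * aa q n k * s ^ k * R (n - k)) +
         (1 + q * s) * (q ^ k * aa q n k * (q * s) ^ k * rsz (n - k) ((q * s) ^ 2) (q ^ 2)))"
    by (simp add: OD_def R_def sum_distrib_left sum.distrib)
  also have "\<dots> = (\<Sum>k\<le>n. X k + Y k + (u k - u (Suc k)))"
  proof (rule sum.cong[OF refl])
    fix k assume k: "k \<in> {..n}"
    have r: "rsz (n - k) ((q * s) ^ 2) (q ^ 2) = R (n - k) - (1 - (q ^ 2) ^ (n - k)) * s ^ 2 * R (n - k - 1)"
      unfolding R_def power_mult_distrib by (rule RQ[OF nz2])
    have r3: "R (Suc n - k) = (1 + s ^ 2) * R (n - k) - (1 - (q ^ 2) ^ (n - k)) * s ^ 2 * R (n - k - 1)"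
      using k unfolding R_def by (simp add: Suc_diff_le R3[OF nz2])
    have c: "u (Suc k) = q ^ Suc k * q ^ k * aa q n k * (1 - (q ^ 2) ^ (n - k)) * s ^ Suc (Suc (Suc k)) * R (n - k - 1)"
    proof -
      have "u (Suc k) = q ^ Suc k * ((1 - q ^ Suc k) * aa q n (Suc k)) * s ^ Suc (Suc (Suc k)) * R (n - k - 1)"
        by (simp add: u_def algebra_simps)
      then show ?thesis by (simp only: C1) (simp add: algebra_simps)
    qed
    show "s * (1 + s) * (q ^ k * aa q n k * s ^ k * R (n - k)) +
         (1 + q * s) * (q ^ k * aa q n k * (q * s) ^ k * rsz (n - k) ((q * s) ^ 2) (q ^ 2)) =
         X k + Y k + (u k - u (Suc k))"
      unfolding r c unfolding X_def r3 unfolding Y_def u_def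
      by (simp add: algebra_simps power_mult_distrib power2_eq_square)
  qed
  also have "\<dots> = (\<Sum>k\<le>n. X k) + (\<Sum>k\<le>n. Y k)"
  proof -
    have "(\<Sum>k\<le>n. u k - u (Suc k)) = 0" by (simp only: sum_telescope) (simp add: u_def abig)
    then show ?thesis by (simp add: sum.distrib)
  qed
  also have "(\<Sum>k\<le>n. X k) = X 0 + (\<Sum>k\<le>n. X (Suc k))"
  proof -
    have "(\<Sum>k\<le>n. X k) = (\<Sum>k\<le>Suc n. X k)" by (simp add: X_def abig)
    then show ?thesis by (simp only: sum.atMost_Suc_shift)
  qed
  also have "X 0 + (\<Sum>k\<le>n. X (Suc k)) + (\<Sum>k\<le>n. Y k) =
     aa q (Suc n) 0 * s ^ 0 * R (Suc n - 0) + (\<Sum>k\<le>n. aa q (Suc n) (Suc k) * s ^ Suc k * R (Suc n - Suc k))"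
  proof -
    have "(\<Sum>k\<le>n. X (Suc k)) + (\<Sum>k\<le>n. Y k) = (\<Sum>k\<le>n. aa q (Suc n) (Suc k) * s ^ Suc k * R (Suc n - Suc k))"
      unfolding sum.distrib[symmetric]
      by (rule sum.cong[OF refl]) (simp add: X_def Y_def C2 algebra_simps sqd power2_eq_square)
    then show ?thesis by (simp add: X_def a0)
  qed
  also have "\<dots> = EV q (Suc n) s"
    unfolding EV_def R_def by (simp only: sum.atMost_Suc_shift)
  finally show ?thesis .
qed


lemma main_gen: "rsz (2 * n) s q = EV q n s \<and> rsz (2 * n + 1) s q = (1 + s) * OD q n s"
proof -
  have ev: "rsz (2 * n) x q = EV q n x" for x
  proof (induction n arbitrary: x)
    case 0
    then show ?case by (simp add: rsz_0 EV_def a0)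
  next
    case (Suc n)
    have o: "rsz (Suc (2 * n)) y q = (1 + y) * OD q n y" for y
      using R1[OF nz, of "2 * n" y] Suc.IH lemA by simp
    have "rsz (2 * Suc n) x q = rsz (Suc (Suc (2 * n))) x q" by simp
    also have "\<dots> = x * rsz (Suc (2 * n)) x q + rsz (Suc (2 * n)) (q * x) q" by (rule R1[OF nz])
    also have "\<dots> = EV q (Suc n) x" unfolding o using lemB[of x n] by (simp add: mult.assoc)
    finally show ?case .
  qed
  show ?thesis using ev R1[OF nz, of "2 * n" s] ev[of s] ev[of "q * s"] lemA by simp
qed

end


theorem corollary1p1:
  fixes s :: "'a::idom poly fract" and n :: nat
  shows "(rsz (2 * n) s qind =
           (\<Sum>k=0..n. qpoch (- qind) qind k * qind ^ (k choose 2) * s ^ k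
              * qbinom (qind ^ 2) n k * rsz (n - k) (s ^ 2) (qind ^ 2))) \<and>
         (rsz (2 * n + 1) s qind =
           (1 + s) * (\<Sum>k=0..n. qpoch (- qind) qind k * qind ^ ((k + 1) choose 2) * s ^ k
              * qbinom (qind ^ 2) n k * rsz (n - k) (s ^ 2) (qind ^ 2)))"
proof -
  have m: "rsz (2 * n) s qind = EV qind n s \<and> rsz (2 * n + 1) s qind = (1 + s) * OD qind n s"
    by (rule main_gen[OF qind_nz])
  have e: "EV qind n s = (\<Sum>k=0..n. qpoch (- qind) qind k * qind ^ (k choose 2) * s ^ k
              * qbinom (qind ^ 2) n k * rsz (n - k) (s ^ 2) (qind ^ 2))"
    unfolding EV_def atLeast0AtMost aa_def by (rule sum.cong) (simp_all add: algebra_simps)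
  have o: "OD qind n s = (\<Sum>k=0..n. qpoch (- qind) qind k * qind ^ ((k + 1) choose 2) * s ^ k
              * qbinom (qind ^ 2) n k * rsz (n - k) (s ^ 2) (qind ^ 2))"
    unfolding OD_def atLeast0AtMost aa_def by (rule sum.cong) (simp_all add: algebra_simps choose2_Suc power_add)
  show ?thesis using m e o by simp
qed

end
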